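(* Let $F=\{f_i\}_{i=1}^N$ be a tight frame for an $n$-dimensional Hilbert space $\mathcal{H}_n$ and let $p>1$. If $S_F^{-1}F\in\zeta_{\mathfrak{R}}^{(1),p}(F)$, then $S_F^{-1}F\in\zeta_{\mathfrak{F}}^{(1),p}(F)$.
   Context: $F$ is tight if $\sum_i|\langle f,f_i\rangle|^2=A\|f\|^2$ for all $f$ and some $A>0$; $S_F$ is the frame operator and $S_F^{-1}F=\{S_F^{-1}f_i\}$ the canonical dual. $G=\{g_i\}$ is a dual of $F$ if $f=\sum_i\langle f,f_i\rangle g_i$ for all $f$. For a dual $G$ define $\mathrm{AE}_{\mathfrak{R}}^{(1),p}(F,G)=\{\frac1N\sum_i|\langle f_i,g_i\rangle|^p\}^{1/p}$ (average of spectral radii of the one-erasure error operators $f\mapsto\langle f,f_i\rangle g_i$) and $\mathrm{AE}_{\mathfrak{F}}^{(1),p}(F,G)=\{\frac1N\sum_i(\|f_i\|\|g_i\|)^p\}^{1/p}$ (average of their Frobenius norms). $\zeta_{\mathfrak{R}}^{(1),p}(F)$ (resp. $\zeta_{\mathfrak{F}}^{(1),p}(F)$) is the set of duals minimizing $\mathrm{AE}_{\mathfrak{R}}^{(1),p}(F,\cdot)$ (resp. $\mathrm{AE}_{\mathfrak{F}}^{(1),p}(F,\cdot)$) over all duals of $F$. *)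

theory Defs
  imports "HOL-Analysis.Analysis"
begin

text \<open>The n-dimensional (complex) Hilbert space H_n is modelled as complex ^ 'n,
  with the standard inner product (linear in the first argument) and its
  induced norm (the library norm on complex ^ 'n). A finite sequence
  F = {f_i}, i = 1..N, is a function nat => complex ^ 'n restricted to i < N.\<close>

definition cinner :: "complex ^ 'n \<Rightarrow> complex ^ 'n \<Rightarrow> complex" where
  "cinner x y = (\<Sum>k\<in>UNIV. x $ k * cnj (y $ k))"

definition is_tight_frame :: "(nat \<Rightarrow> complex ^ 'n) \<Rightarrow> nat \<Rightarrow> bool" where
  "is_tight_frame F N \<longleftrightarrow> (\<exists>A>0. \<forall>f. (\<Sum>i<N. (cmod (cinner f (F i)))\<^sup>2) = A * (norm f)\<^sup>2)"

definition frame_op :: "(nat \<Rightarrow> complex ^ 'n) \<Rightarrow> nat \<Rightarrow> complex ^ 'n \<Rightarrow> complex ^ 'n" where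
  "frame_op F N f = (\<Sum>i<N. cinner f (F i) *s F i)"

definition canonical_dual :: "(nat \<Rightarrow> complex ^ 'n) \<Rightarrow> nat \<Rightarrow> nat \<Rightarrow> complex ^ 'n" where
  "canonical_dual F N i = inv (frame_op F N) (F i)"

definition is_dual :: "(nat \<Rightarrow> complex ^ 'n) \<Rightarrow> nat \<Rightarrow> (nat \<Rightarrow> complex ^ 'n) \<Rightarrow> bool" where
  "is_dual F N G \<longleftrightarrow> (\<forall>f. f = (\<Sum>i<N. cinner f (F i) *s G i))"

definition AE_R :: "real \<Rightarrow> (nat \<Rightarrow> complex ^ 'n) \<Rightarrow> nat \<Rightarrow> (nat \<Rightarrow> complex ^ 'n) \<Rightarrow> real" where
  "AE_R p F N G = ((1 / real N) * (\<Sum>i<N. (cmod (cinner (F i) (G i))) powr p)) powr (1 / p)"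

definition AE_F :: "real \<Rightarrow> (nat \<Rightarrow> complex ^ 'n) \<Rightarrow> nat \<Rightarrow> (nat \<Rightarrow> complex ^ 'n) \<Rightarrow> real" where
  "AE_F p F N G = ((1 / real N) * (\<Sum>i<N. (norm (F i) * norm (G i)) powr p)) powr (1 / p)"

definition zeta_R :: "real \<Rightarrow> (nat \<Rightarrow> complex ^ 'n) \<Rightarrow> nat \<Rightarrow> (nat \<Rightarrow> complex ^ 'n) set" where
  "zeta_R p F N = {G. is_dual F N G \<and> (\<forall>H. is_dual F N H \<longrightarrow> AE_R p F N G \<le> AE_R p F N H)}"

definition zeta_F :: "real \<Rightarrow> (nat \<Rightarrow> complex ^ 'n) \<Rightarrow> nat \<Rightarrow> (nat \<Rightarrow> complex ^ 'n) set" where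
  "zeta_F p F N = {G. is_dual F N G \<and> (\<forall>H. is_dual F N H \<longrightarrow> AE_F p F N G \<le> AE_F p F N H)}"

end

theory Submission
  imports Defs
begin

lemma cinner_add_left: "cinner (x + y) z = cinner x z + cinner y z"
  by (simp add: cinner_def distrib_right sum.distrib)

lemma cinner_diff_left: "cinner (x - y) z = cinner x z - cinner y z"
  by (simp add: cinner_def left_diff_distrib sum_subtractf)

lemma cinner_scale_left: "cinner (c *s x) z = c * cinner x z"
  by (simp add: cinner_def sum_distrib_left mult.assoc)

lemma cinner_add_right: "cinner z (x + y) = cinner z x + cinner z y"
  by (simp add: cinner_def distrib_left sum.distrib)

lemma cinner_scale_right: "cinner z (c *s x) = cnj c * cinner z x"
  by (simp add: cinner_def sum_distrib_left mult.assoc mult.left_commute)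

lemma cinner_sum_left: "cinner (\<Sum>i\<in>I. v i) z = (\<Sum>i\<in>I. cinner (v i) z)"
  unfolding cinner_def by (simp add: sum_component sum_distrib_right) (rule sum.swap)

lemma cinner_cnj: "cinner x y = cnj (cinner y x)"
  by (simp add: cinner_def mult.commute)

lemma norm_sq_vec: "(norm (x :: complex ^ 'n))\<^sup>2 = (\<Sum>k\<in>UNIV. (cmod (x $ k))\<^sup>2)"
  unfolding norm_vec_def L2_set_def by (simp add: sum_nonneg)

lemma cinner_self: "cinner x x = complex_of_real ((norm x)\<^sup>2)"
  unfolding norm_sq_vec cinner_def
  by (simp add: complex_norm_square of_real_sum del: of_real_power)

lemma cinner_self_eq0: "cinner x x = 0 \<Longrightarrow> x = 0"
  by (simp add: cinner_self)

lemma cauchy_schwarz_c: "cmod (cinner (x :: complex ^ 'n) y) \<le> norm x * norm y"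
proof -
  define ax :: "real ^ 'n" where "ax = (\<chi> k. cmod (x $ k))"
  define ay :: "real ^ 'n" where "ay = (\<chi> k. cmod (y $ k))"
  have nx: "norm ax = norm x" unfolding ax_def norm_vec_def by simp
  have ny: "norm ay = norm y" unfolding ay_def norm_vec_def by simp
  have "cmod (cinner x y) \<le> (\<Sum>k\<in>UNIV. cmod (x $ k * cnj (y $ k)))"
    unfolding cinner_def by (rule norm_sum)
  also have "\<dots> = inner ax ay"
    unfolding ax_def ay_def inner_vec_def by (simp add: norm_mult)
  also have "\<dots> \<le> norm ax * norm ay" by (rule norm_cauchy_schwarz)
  finally show ?thesis using nx ny by simp
qed

lemma frame_op_add: "frame_op F N (f + g) = frame_op F N f + frame_op F N g"
  unfolding frame_op_def by (simp add: cinner_add_left sum.distrib)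

lemma frame_op_scale: "frame_op F N (c *s f) = c *s frame_op F N f"
  unfolding frame_op_def by (simp add: vec_eq_iff sum_component cinner_scale_left sum_distrib_left mult.assoc)

lemma frame_op_cinner: "cinner (frame_op F N f) g = (\<Sum>i<N. cinner f (F i) * cinner (F i) g)"
  unfolding frame_op_def by (simp add: cinner_sum_left cinner_scale_left)

lemma tight_op:
  fixes F :: "nat \<Rightarrow> complex ^ 'n"
  assumes A: "\<And>f. (\<Sum>i<N. (cmod (cinner f (F i)))\<^sup>2) = A * (norm f)\<^sup>2"
  shows "frame_op F N f = complex_of_real A *s f"
proof -
  define T where "T f = frame_op F N f - complex_of_real A *s f" for f
  have Tadd: "T (f + g) = T f + T g" for f g
    unfolding T_def frame_op_add by (simp add: vector_add_ldistrib)
  have Tscale: "T (c *s f) = c *s T f" for c f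
    unfolding T_def frame_op_scale by (simp add: vec_eq_iff algebra_simps)
  have Q: "cinner (T f) f = 0" for f
  proof -
    have "cinner (frame_op F N f) f = (\<Sum>i<N. complex_of_real ((cmod (cinner f (F i)))\<^sup>2))"
      unfolding frame_op_cinner
      by (rule sum.cong) (auto simp: cinner_cnj[of "F _" f] complex_norm_square simp del: of_real_power)
    also have "\<dots> = complex_of_real (A * (norm f)\<^sup>2)"
      by (simp only: of_real_sum[symmetric] A)
    finally show ?thesis
      unfolding T_def cinner_diff_left cinner_scale_left cinner_self by simp
  qed
  have Z: "cinner (T f) g = 0" for f g
  proof -
    have 1: "cinner (T f) g + cinner (T g) f = 0"
      using Q[of "f + g"] Q[of f] Q[of g]
      by (simp add: Tadd cinner_add_left cinner_add_right add.commute)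
    have 2: "- \<i> * cinner (T f) g + \<i> * cinner (T g) f = 0"
      using Q[of "f + \<i> *s g"] Q[of f] Q[of g]
      by (simp add: Tadd Tscale cinner_add_left cinner_add_right cinner_scale_left cinner_scale_right algebra_simps)
    from 1 have "cinner (T g) f = - cinner (T f) g" by (metis add.commute eq_neg_iff_add_eq_0)
    with 2 have "(2 * \<i>) * cinner (T f) g = 0" by (simp add: algebra_simps)
    then show ?thesis by simp
  qed
  have "T f = 0" using Z[of f "T f"] by (rule cinner_self_eq0)
  then show ?thesis unfolding T_def by simp
qed

theorem corollary5p7:
  fixes F :: "nat \<Rightarrow> complex ^ 'n" and N :: nat and p :: real
  assumes "is_tight_frame F N"
    and "p > 1"
    and "canonical_dual F N \<in> zeta_R p F N"
  shows "canonical_dual F N \<in> zeta_F p F N"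
proof -
  obtain A where A0: "A > 0" and A: "\<And>f. (\<Sum>i<N. (cmod (cinner f (F i)))\<^sup>2) = A * (norm f)\<^sup>2"
    using assms(1) unfolding is_tight_frame_def by blast
  let ?S = "frame_op F N"
  let ?G = "canonical_dual F N"
  have S: "?S f = complex_of_real A *s f" for f by (rule tight_op[OF A])
  have surj: "surj ?S"
  proof (rule surjI)
    fix y show "?S (complex_of_real (1 / A) *s y) = y"
      using A0 by (simp add: S vec_eq_iff)
  qed
  have G: "?G i = (1 / A) *\<^sub>R F i" for i
  proof -
    have "?S (?G i) = F i" unfolding canonical_dual_def by (rule surj_f_inv_f[OF surj])
    then have "complex_of_real A *s ?G i = F i" by (simp add: S)
    then have "?G i = complex_of_real (1 / A) *s F i"
      using A0 by (auto simp: vec_eq_iff field_simps)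
    then show ?thesis by (simp add: vec_eq_iff, simp add: scaleR_conv_of_real)
  qed
  have eq: "cmod (cinner (F i) (?G i)) = norm (F i) * norm (?G i)" for i
  proof -
    have "?G i = complex_of_real (1 / A) *s F i" unfolding G by (simp add: vec_eq_iff, simp add: scaleR_conv_of_real)
    then have "cinner (F i) (?G i) = complex_of_real ((1 / A) * (norm (F i))\<^sup>2)"
      by (simp add: cinner_scale_right cinner_self)
    then have "cmod (cinner (F i) (?G i)) = (1 / A) * (norm (F i))\<^sup>2"
      using A0 by (simp only: norm_of_real) simp
    moreover have "norm (?G i) = (1 / A) * norm (F i)" unfolding G using A0 by simp
    ultimately show ?thesis by (simp add: power2_eq_square)
  qed
  have dual: "is_dual F N ?G" and minR: "\<And>H. is_dual F N H \<Longrightarrow> AE_R p F N ?G \<le> AE_R p F N H"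
    using assms(3) unfolding zeta_R_def by auto
  have RF: "AE_R p F N H \<le> AE_F p F N H" for H
  proof -
    have "(\<Sum>i<N. (cmod (cinner (F i) (H i))) powr p) \<le> (\<Sum>i<N. (norm (F i) * norm (H i)) powr p)"
      by (rule sum_mono, rule powr_mono2) (use assms(2) cauchy_schwarz_c in auto)
    then have "(1 / real N) * (\<Sum>i<N. (cmod (cinner (F i) (H i))) powr p) \<le> (1 / real N) * (\<Sum>i<N. (norm (F i) * norm (H i)) powr p)"
      by (rule mult_left_mono) simp
    then show ?thesis unfolding AE_R_def AE_F_def
      by (intro powr_mono2) (use assms(2) in \<open>auto intro!: sum_nonneg divide_nonneg_nonneg\<close>)
  qed
  have GF: "AE_F p F N ?G = AE_R p F N ?G" unfolding AE_R_def AE_F_def eq ..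
  show ?thesis unfolding zeta_F_def
    using dual minR RF GF by (auto intro: order_trans)
qed

end
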